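(* Let ${\bf A},{\bf A}^\dagger$ be linear operators acting on real functions on a set $\Omega$ (on a common invariant domain) with $[{\bf A},{\bf A}^\dagger]=I$. Let $D:\Omega\times\mathbb N\to\mathbb R$ be functions such that $({\bf A}^\dagger_l)^nD(x,0)=D(x,n)$ for all $n\in\mathbb N$, $x\in\Omega$, and ${\bf A}_lD(x,0)=0$. Then ${\bf A}\rightarrow^Da$ and ${\bf A}^\dagger\rightarrow^Da^\dagger$. Consequently, for any polynomials $\alpha_n$, $0\le n\le m$, $\sum_{n=0}^m\alpha_n({\bf A}^\dagger){\bf A}^n\rightarrow^D\sum_{n=0}^m a^n\alpha_n(a^\dagger)$.
   Context: $\mathbb N=\{0,1,2,\dots\}$. On functions $f:\mathbb N\to\mathbb R$: $af(n)=nf(n-1)$, $a^\dagger f(n)=f(n+1)$. $[X,Y]=XY-YX$ and $I$ is the identity. Left/right actions: $(K_lD)(x,n)=(KD(\cdot,n))(x)$, $(\widehat K_rD)(x,n)=(\widehat KD(x,\cdot))(n)$; $K\rightarrow^D\widehat K$ means $K_lD=\widehat K_rD$. *)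

theory Defs
  imports Main "HOL-Computational_Algebra.Polynomial"
begin

definition a_op :: "(nat \<Rightarrow> real) \<Rightarrow> nat \<Rightarrow> real" where
  "a_op f n = real n * f (n - 1)"

definition adag_op :: "(nat \<Rightarrow> real) \<Rightarrow> nat \<Rightarrow> real" where
  "adag_op f n = f (Suc n)"

definition left_act :: "(('a \<Rightarrow> real) \<Rightarrow> ('a \<Rightarrow> real)) \<Rightarrow> ('a \<Rightarrow> nat \<Rightarrow> real) \<Rightarrow> 'a \<Rightarrow> nat \<Rightarrow> real" where
  "left_act K D = (\<lambda>x n. K (\<lambda>y. D y n) x)"

definition right_act :: "((nat \<Rightarrow> real) \<Rightarrow> (nat \<Rightarrow> real)) \<Rightarrow> ('a \<Rightarrow> nat \<Rightarrow> real) \<Rightarrow> 'a \<Rightarrow> nat \<Rightarrow> real" where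
  "right_act K D = (\<lambda>x n. K (\<lambda>m. D x m) n)"

definition intertwines :: "(('a \<Rightarrow> real) \<Rightarrow> ('a \<Rightarrow> real)) \<Rightarrow> ('a \<Rightarrow> nat \<Rightarrow> real) \<Rightarrow> ((nat \<Rightarrow> real) \<Rightarrow> (nat \<Rightarrow> real)) \<Rightarrow> bool" where
  "intertwines K D Khat \<longleftrightarrow> left_act K D = right_act Khat D"

definition poly_op :: "real poly \<Rightarrow> (('b \<Rightarrow> real) \<Rightarrow> ('b \<Rightarrow> real)) \<Rightarrow> ('b \<Rightarrow> real) \<Rightarrow> 'b \<Rightarrow> real" where
  "poly_op p K f = (\<lambda>x. \<Sum>j\<le>degree p. coeff p j * (K ^^ j) f x)"

definition fun_subspace :: "('a \<Rightarrow> real) set \<Rightarrow> bool" where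
  "fun_subspace V \<longleftrightarrow> (\<lambda>x. 0) \<in> V \<and> (\<forall>f\<in>V. \<forall>g\<in>V. (\<lambda>x. f x + g x) \<in> V)
     \<and> (\<forall>c f. f \<in> V \<longrightarrow> (\<lambda>x. c * f x) \<in> V)"

definition linear_on :: "('a \<Rightarrow> real) set \<Rightarrow> (('a \<Rightarrow> real) \<Rightarrow> ('a \<Rightarrow> real)) \<Rightarrow> bool" where
  "linear_on V K \<longleftrightarrow> (\<forall>f\<in>V. \<forall>g\<in>V. K (\<lambda>x. f x + g x) = (\<lambda>x. K f x + K g x))
     \<and> (\<forall>c. \<forall>f\<in>V. K (\<lambda>x. c * f x) = (\<lambda>x. c * K f x))"

end

theory Submission
  imports Defs
begin

fun cc :: "nat \<Rightarrow> nat \<Rightarrow> real" where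
  "cc n 0 = 1"
| "cc n (Suc k) = real n * cc (n - 1) k"

lemma funpow_inv:
  assumes "\<forall>f\<in>V. K f \<in> V" "f \<in> V" shows "(K ^^ j) f \<in> V"
proof (induction j)
  case 0 then show ?case using assms(2) by simp
next
  case (Suc j) then show ?case using assms(1) by simp
qed

lemma funpow_lin:
  assumes inv: "\<forall>f\<in>V. K f \<in> V" and lin: "linear_on V K" and f: "f \<in> V"
  shows "(K ^^ j) (\<lambda>x. c * f x) = (\<lambda>x. c * (K ^^ j) f x)"
proof (induction j)
  case 0 then show ?case by simp
next
  case (Suc j)
  have m: "(K ^^ j) f \<in> V" by (rule funpow_inv[OF inv f])
  have l: "K (\<lambda>x. c * g x) = (\<lambda>x. c * K g x)" if "g \<in> V" for g
    using lin that unfolding linear_on_def by blast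
  have "(K ^^ Suc j) (\<lambda>x. c * f x) = K ((K ^^ j) (\<lambda>x. c * f x))" by simp
  also have "\<dots> = K (\<lambda>x. c * (K ^^ j) f x)" by (simp only: Suc)
  also have "\<dots> = (\<lambda>x. c * K ((K ^^ j) f) x)" by (rule l[OF m])
  finally show ?case by simp
qed

lemma a_pow: "(a_op ^^ k) g n = cc n k * g (n - k)"
  by (induction k arbitrary: n) (auto simp: a_op_def)

lemma adag_pow: "(adag_op ^^ j) g m = g (m + j)"
  by (induction j arbitrary: m) (auto simp: adag_op_def)

theorem proposition3p1:
  fixes A Ad :: "('a \<Rightarrow> real) \<Rightarrow> ('a \<Rightarrow> real)"
    and V :: "('a \<Rightarrow> real) set"
    and D :: "'a \<Rightarrow> nat \<Rightarrow> real"
  assumes V: "fun_subspace V"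
    and A_inv: "\<forall>f\<in>V. A f \<in> V" and Ad_inv: "\<forall>f\<in>V. Ad f \<in> V"
    and A_lin: "linear_on V A" and Ad_lin: "linear_on V Ad"
    and comm: "\<forall>f\<in>V. \<forall>x. A (Ad f) x - Ad (A f) x = f x"
    and D0: "(\<lambda>x. D x 0) \<in> V"
    and Dn: "\<forall>n x. (Ad ^^ n) (\<lambda>y. D y 0) x = D x n"
    and vac: "\<forall>x. A (\<lambda>y. D y 0) x = 0"
  shows "intertwines A D a_op \<and> intertwines Ad D adag_op \<and>
    (\<forall>(\<alpha> :: nat \<Rightarrow> real poly) m.
       intertwines (\<lambda>f x. \<Sum>n\<le>m. poly_op (\<alpha> n) Ad ((A ^^ n) f) x) D
                   (\<lambda>g k. \<Sum>n\<le>m. (a_op ^^ n) (poly_op (\<alpha> n) adag_op g) k))"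
proof -
  have DnR: "(Ad ^^ n) (\<lambda>y. D y 0) = (\<lambda>y. D y n)" for n
    using Dn by auto
  have DV: "(\<lambda>y. D y n) \<in> V" for n
    using funpow_inv[OF Ad_inv D0, of n] DnR[of n] by simp
  have AdD: "Ad (\<lambda>y. D y n) = (\<lambda>y. D y (Suc n))" for n
    using DnR[of "Suc n"] DnR[of n] by simp
  have AdpD: "(Ad ^^ j) (\<lambda>y. D y m) = (\<lambda>y. D y (m + j))" for j m
    by (induction j) (auto simp: AdD)
  have AD: "A (\<lambda>y. D y n) = (\<lambda>x. real n * D x (n - 1))" for n
  proof (induction n)
    case 0 then show ?case using vac by (simp add: fun_eq_iff)
  next
    case (Suc n)
    have "A (\<lambda>y. D y (Suc n)) = A (Ad (\<lambda>y. D y n))" using AdD by simp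
    also have "\<dots> = (\<lambda>x. Ad (A (\<lambda>y. D y n)) x + D x n)"
      using comm DV by (auto simp: algebra_simps)
    also have "Ad (A (\<lambda>y. D y n)) = (\<lambda>x. real n * D x n)"
    proof -
      have "Ad (A (\<lambda>y. D y n)) = (\<lambda>x. real n * Ad (\<lambda>y. D y (n - 1)) x)"
        using Suc Ad_lin DV unfolding linear_on_def by simp
      also have "\<dots> = (\<lambda>x. real n * D x n)"
        by (cases n) (auto simp: AdD)
      finally show ?thesis .
    qed
    finally show ?case by (auto simp: algebra_simps)
  qed
  have ApD: "(A ^^ k) (\<lambda>y. D y n) = (\<lambda>x. cc n k * D x (n - k))" for k n
  proof (induction k arbitrary: n)
    case 0 then show ?case by simp
  next
    case (Suc k)
    have "(A ^^ Suc k) (\<lambda>y. D y n) = (A ^^ k) (\<lambda>x. real n * D x (n - 1))"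
      by (simp add: funpow_Suc_right AD del: funpow.simps)
    also have "\<dots> = (\<lambda>x. real n * (A ^^ k) (\<lambda>y. D y (n - 1)) x)"
      by (rule funpow_lin[OF A_inv A_lin DV])
    also have "\<dots> = (\<lambda>x. cc n (Suc k) * D x (n - Suc k))"
      unfolding Suc.IH[of "n - 1"] by (simp add: mult.assoc)
    finally show ?case .
  qed
  have I1: "intertwines A D a_op"
    unfolding intertwines_def left_act_def right_act_def
    by (auto simp: AD a_op_def fun_eq_iff)
  have I2: "intertwines Ad D adag_op"
    unfolding intertwines_def left_act_def right_act_def
    by (auto simp: AdD adag_op_def fun_eq_iff)
  have I3: "intertwines (\<lambda>f x. \<Sum>n\<le>m. poly_op (\<alpha> n) Ad ((A ^^ n) f) x) D
                   (\<lambda>g k. \<Sum>n\<le>m. (a_op ^^ n) (poly_op (\<alpha> n) adag_op g) k)" for \<alpha> m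
  proof -
    have eq: "poly_op (\<alpha> k) Ad ((A ^^ k) (\<lambda>y. D y n)) x
        = (a_op ^^ k) (poly_op (\<alpha> k) adag_op (D x)) n" for k n x
    proof -
      have "poly_op (\<alpha> k) Ad ((A ^^ k) (\<lambda>y. D y n)) x
          = (\<Sum>j\<le>degree (\<alpha> k). coeff (\<alpha> k) j * (cc n k * D x (n - k + j)))"
        unfolding poly_op_def ApD funpow_lin[OF Ad_inv Ad_lin DV] AdpD by simp
      also have "\<dots> = cc n k * (\<Sum>j\<le>degree (\<alpha> k). coeff (\<alpha> k) j * D x (n - k + j))"
        by (simp add: sum_distrib_left algebra_simps)
      also have "\<dots> = (a_op ^^ k) (poly_op (\<alpha> k) adag_op (D x)) n"
        unfolding a_pow poly_op_def adag_pow by simp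
      finally show ?thesis .
    qed
    show ?thesis
      unfolding intertwines_def left_act_def right_act_def
    proof (intro ext)
      fix x n
      show "(\<Sum>k\<le>m. poly_op (\<alpha> k) Ad ((A ^^ k) (\<lambda>y. D y n)) x)
          = (\<Sum>k\<le>m. (a_op ^^ k) (poly_op (\<alpha> k) adag_op (\<lambda>m. D x m)) n)"
        by (simp only: eq)
    qed
  qed
  show ?thesis
    apply (intro conjI allI)
      apply (rule I1)
     apply (rule I2)
    apply (rule I3)
    done
qed

end
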